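(* Suppose $\phi_1,\phi_2$ satisfy the Doubrov–Ferapontov modified heavenly hierarchy $(\Phi_1\wedge\Phi_2)_-=0$. Define the vector fields $$T_n=\partial_{t_n}-\begin{vmatrix}\phi_{1,t_n}&\phi_{2,t_n}\\ \phi_{1,y}&\phi_{2,y}\end{vmatrix}_+\partial_x-\begin{vmatrix}\phi_{2,t_n}&\phi_{1,t_n}\\ \phi_{2,x}&\phi_{1,x}\end{vmatrix}_+\partial_y,\qquad Z_j=\lambda\partial_{z_j}-\begin{vmatrix}\lambda\phi_{1,z_j}&\lambda\phi_{2,z_j}\\ \phi_{1,y}&\phi_{2,y}\end{vmatrix}_+\partial_x-\begin{vmatrix}\lambda\phi_{2,z_j}&\lambda\phi_{1,z_j}\\ \phi_{2,x}&\phi_{1,x}\end{vmatrix}_+\partial_y$$ for $n,j\ge1$. Then $T_n\vec\phi=Z_j\vec\phi=0$ for all $n,j$, and the vector fields pairwise commute: $[T_n,T_s]=0$, $[T_n,Z_j]=0$, $[Z_i,Z_j]=0$ for all $n,s,i,j\ge1$.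
   Context: Independent variables are $x,y$ and two infinite families $t_1,t_2,\dots$ and $z_1,z_2,\dots$; write $t:=t_1$, $z:=z_1$. $\lambda$ is a formal spectral parameter. For a formal Laurent series $\sum_n a_n\lambda^n$, set $(\sum_n a_n\lambda^n)_+=\sum_{n\ge0}a_n\lambda^n$ and $(\sum_n a_n\lambda^n)_-=\sum_{n<0}a_n\lambda^n$; for a determinant, $|\cdot|_+$ denotes the $(\cdot)_+$ part of the determinant. Consider formal series $\phi_1=-y+\sum_{j\ge2}z_j\lambda^{j-1}+\sum_{k\ge1}g_k\lambda^{-k}$, $\phi_2=x+t_1\lambda+\sum_{n\ge2}t_n\lambda^n+\sum_{m\ge1}f_m\lambda^{-m}$, where $g_k,f_m$ are functions of $(x,y,t_1,t_2,\dots,z_1,z_2,\dots)$, and $\vec\phi=(\phi_1,\phi_2)^T$. Define the 1-forms $\Phi_i=\phi_{i,x}dx+\phi_{i,y}dy+\sum_{n\ge1}\phi_{i,t_n}dt_n+\lambda\sum_{j\ge1}\phi_{i,z_j}dz_j$ ($i=1,2$). The Doubrov–Ferapontov modified heavenly hierarchy is $(\Phi_1\wedge\Phi_2)_-=0$, meaning that the negative-power part (in $\lambda$) of the coefficient of every basis 2-form vanishes; explicitly, for variables $a,b$ among $x,y,t_n,z_j$, the coefficient of $da\wedge db$ is $\lambda^{\epsilon}\,\partial(\phi_1,\phi_2)/\partial(a,b)$, where $\partial(\phi_1,\phi_2)/\partial(a,b)=\phi_{1,a}\phi_{2,b}-\phi_{1,b}\phi_{2,a}$ and $\epsilon$ is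 the number of $z$-variables among $a,b$. Subscripts denote partial derivatives. *)

theory Defs
  imports "HOL-Analysis.Analysis"
begin

text \<open>Independent variables: x, y, t_n (n >= 1), z_j (j >= 1).
  The constructors T 0 and Z 0 exist in the type but are never used as
  hierarchy variables (they are inert spectator coordinates).\<close>
datatype var = X | Y | T nat | Z nat

definition valid_var :: "var \<Rightarrow> bool" where
  "valid_var v \<longleftrightarrow> (case v of T n \<Rightarrow> n \<ge> 1 | Z j \<Rightarrow> j \<ge> 1 | _ \<Rightarrow> True)"

definition is_z :: "var \<Rightarrow> bool" where
  "is_z v \<longleftrightarrow> (case v of Z _ \<Rightarrow> True | _ \<Rightarrow> False)"

text \<open>Functions of the independent variables, and formal series in lambda:
  a series S has coefficient S i of lambda^i (i :: int).\<close>
type_synonym fn = "(var \<Rightarrow> real) \<Rightarrow> real"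
type_synonym ser = "int \<Rightarrow> fn"

definition coord :: "var \<Rightarrow> fn" where
  "coord v = (\<lambda>p. p v)"

definition pd :: "var \<Rightarrow> fn \<Rightarrow> fn" where
  "pd v F = (\<lambda>p. deriv (\<lambda>s. F (p(v := s))) (p v))"

fun pds :: "var list \<Rightarrow> fn \<Rightarrow> fn" where
  "pds [] F = F"
| "pds (v # vs) F = pd v (pds vs F)"

definition smooth :: "fn \<Rightarrow> bool" where
  "smooth F \<longleftrightarrow>
     (\<forall>vs v p. (\<lambda>s. pds vs F (p(v := s))) differentiable (at (p v))) \<and>
     (\<forall>vs a b. pd a (pd b (pds vs F)) = pd b (pd a (pds vs F)))"

definition zero_fn :: fn where "zero_fn = (\<lambda>_. 0)"
definition zero_ser :: ser where "zero_ser = (\<lambda>_. zero_fn)"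
definition one_ser :: ser where "one_ser = (\<lambda>i. if i = 0 then (\<lambda>_. 1) else zero_fn)"

definition spd :: "var \<Rightarrow> ser \<Rightarrow> ser" where
  "spd v S = (\<lambda>i. pd v (S i))"

definition sadd :: "ser \<Rightarrow> ser \<Rightarrow> ser" where
  "sadd S R = (\<lambda>i p. S i p + R i p)"

definition sneg :: "ser \<Rightarrow> ser" where
  "sneg S = (\<lambda>i p. - S i p)"

definition ssub :: "ser \<Rightarrow> ser \<Rightarrow> ser" where
  "ssub S R = (\<lambda>i p. S i p - R i p)"

text \<open>Cauchy product; the sum ranges over the (finite, for series with
  finitely many positive powers) set of contributing indices.\<close>
definition smult :: "ser \<Rightarrow> ser \<Rightarrow> ser" where
  "smult S R = (\<lambda>n p. \<Sum>k \<in> {k. S k \<noteq> zero_fn \<and> R (n - k) \<noteq> zero_fn}. S k p * R (n - k) p)"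

definition lampow :: "nat \<Rightarrow> ser \<Rightarrow> ser" where
  "lampow m S = (\<lambda>i. S (i - int m))"

definition pos_part :: "ser \<Rightarrow> ser" where
  "pos_part S = (\<lambda>i. if i \<ge> 0 then S i else zero_fn)"

definition neg_part :: "ser \<Rightarrow> ser" where
  "neg_part S = (\<lambda>i. if i < 0 then S i else zero_fn)"

definition sdet :: "ser \<Rightarrow> ser \<Rightarrow> ser \<Rightarrow> ser \<Rightarrow> ser" where
  "sdet a b c d = ssub (smult a d) (smult b c)"

text \<open>phi_1 = -y + sum_{j>=2} z_j lambda^(j-1) + sum_{k>=1} g_k lambda^(-k)\<close>
definition phi1 :: "(nat \<Rightarrow> fn) \<Rightarrow> ser" where
  "phi1 g = (\<lambda>i. if i = 0 then (\<lambda>p. - p Y)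
                 else if i > 0 then coord (Z (nat i + 1))
                 else g (nat (- i)))"

text \<open>phi_2 = x + sum_{n>=1} t_n lambda^n + sum_{m>=1} f_m lambda^(-m)\<close>
definition phi2 :: "(nat \<Rightarrow> fn) \<Rightarrow> ser" where
  "phi2 f = (\<lambda>i. if i = 0 then coord X
                 else if i > 0 then coord (T (nat i))
                 else f (nat (- i)))"

text \<open>Coefficient of da /\ db in Phi_1 /\ Phi_2:
  lambda^eps * d(phi1,phi2)/d(a,b), eps = number of z-variables among a,b.\<close>
definition wedge_coeff :: "ser \<Rightarrow> ser \<Rightarrow> var \<Rightarrow> var \<Rightarrow> ser" where
  "wedge_coeff P1 P2 a b =
     lampow ((if is_z a then 1 else 0) + (if is_z b then 1 else 0))
       (ssub (smult (spd a P1) (spd b P2)) (smult (spd b P1) (spd a P2)))"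

definition DF_hierarchy :: "(nat \<Rightarrow> fn) \<Rightarrow> (nat \<Rightarrow> fn) \<Rightarrow> bool" where
  "DF_hierarchy g f \<longleftrightarrow>
     (\<forall>a b. valid_var a \<longrightarrow> valid_var b \<longrightarrow>
        neg_part (wedge_coeff (phi1 g) (phi2 f) a b) = zero_ser)"

text \<open>Vector fields with coefficients that are series in lambda:
  V u is the coefficient of the partial derivative in direction u.\<close>
type_synonym vfield = "var \<Rightarrow> ser"

definition vf_app :: "vfield \<Rightarrow> ser \<Rightarrow> ser" where
  "vf_app V S = (\<lambda>n p. \<Sum>u \<in> {u. V u \<noteq> zero_ser}. smult (V u) (spd u S) n p)"

definition vf_bracket :: "vfield \<Rightarrow> vfield \<Rightarrow> vfield" where
  "vf_bracket V W = (\<lambda>u. ssub (vf_app V (W u)) (vf_app W (V u)))"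

definition zero_vf :: vfield where "zero_vf = (\<lambda>_. zero_ser)"

definition Tvf :: "(nat \<Rightarrow> fn) \<Rightarrow> (nat \<Rightarrow> fn) \<Rightarrow> nat \<Rightarrow> vfield" where
  "Tvf g f n = (let P1 = phi1 g; P2 = phi2 f; w = T n in
     (\<lambda>u. if u = w then one_ser
          else if u = X then sneg (pos_part (sdet (spd w P1) (spd w P2) (spd Y P1) (spd Y P2)))
          else if u = Y then sneg (pos_part (sdet (spd w P2) (spd w P1) (spd X P2) (spd X P1)))
          else zero_ser))"

definition Zvf :: "(nat \<Rightarrow> fn) \<Rightarrow> (nat \<Rightarrow> fn) \<Rightarrow> nat \<Rightarrow> vfield" where
  "Zvf g f j = (let P1 = phi1 g; P2 = phi2 f; w = Z j in
     (\<lambda>u. if u = w then lampow 1 one_ser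
          else if u = X then sneg (pos_part (sdet (lampow 1 (spd w P1)) (lampow 1 (spd w P2)) (spd Y P1) (spd Y P2)))
          else if u = Y then sneg (pos_part (sdet (lampow 1 (spd w P2)) (lampow 1 (spd w P1)) (spd X P2) (spd X P1)))
          else zero_ser))"

end

theory Submission imports Defs "HOL-Library.Function_Algebras" "HOL-Computational_Algebra.Formal_Laurent_Series"
begin
notation fls_nth (infixl \<open>$$\<close> 75)


lemma sum_fun_apply: "(\<Sum>x\<in>A. (f x :: 'a \<Rightarrow> 'b::comm_monoid_add)) p = (\<Sum>x\<in>A. f x p)"
  by (induction A rule: infinite_finite_induct) auto

definition dif :: "fn \<Rightarrow> bool" where
  "dif F \<longleftrightarrow> (\<forall>v p. (\<lambda>s. F (p(v := s))) differentiable (at (p v)))"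

lemma pd_const[simp]: "pd v (\<lambda>_. c) = (\<lambda>_. 0)"
  by (simp add: pd_def)

lemma pd_zero[simp]: "pd v 0 = 0"
  by (simp add: pd_def zero_fun_def)

lemma pd_coord: "pd v (coord w) = (\<lambda>_. if v = w then 1 else 0)"
proof -
  have "\<And>p. (\<lambda>s. (p(v := s)) w) = (if v = w then (\<lambda>s. s) else (\<lambda>s. p w))" by auto
  then show ?thesis by (auto simp: pd_def coord_def fun_eq_iff)
qed

lemma dif_const: "dif (\<lambda>_. c)" by (simp add: dif_def)
lemma dif_coord: "dif (coord w)"
proof -
  have "\<And>p v. (\<lambda>s. (p(v := s)) w) = (if v = w then (\<lambda>s. s) else (\<lambda>s. p w))" by auto
  then show ?thesis unfolding dif_def coord_def
    by (metis differentiable_const differentiable_ident fun_upd_other fun_upd_same)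
qed
lemma dif_add: "dif F \<Longrightarrow> dif G \<Longrightarrow> dif (F + G)"
  by (auto simp: dif_def plus_fun_def intro!: differentiable_add)
lemma dif_mult: "dif F \<Longrightarrow> dif G \<Longrightarrow> dif (F * G)"
  by (auto simp: dif_def times_fun_def intro!: differentiable_mult)
lemma dif_neg: "dif F \<Longrightarrow> dif (- F)"
  by (auto simp: dif_def fun_Compl_def fun_Compl_def intro!: differentiable_minus)

lemma pd_add: "dif F \<Longrightarrow> dif G \<Longrightarrow> pd v (F + G) = pd v F + pd v G"
  unfolding pd_def dif_def plus_fun_def
proof (intro ext)
  fix p assume a: "\<forall>v p. (\<lambda>s. F (p(v := s))) differentiable at (p v)" "\<forall>v p. (\<lambda>s. G (p(v := s))) differentiable at (p v)"
  have d1: "DERIV (\<lambda>s. F (p(v := s))) (p v) :> deriv (\<lambda>s. F (p(v := s))) (p v)"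
    using a(1) DERIV_deriv_iff_real_differentiable by blast
  have d2: "DERIV (\<lambda>s. G (p(v := s))) (p v) :> deriv (\<lambda>s. G (p(v := s))) (p v)"
    using a(2) DERIV_deriv_iff_real_differentiable by blast
  show "deriv (\<lambda>s. F (p(v := s)) + G (p(v := s))) (p v) = deriv (\<lambda>s. F (p(v := s))) (p v) + deriv (\<lambda>s. G (p(v := s))) (p v)"
    by (rule DERIV_imp_deriv[OF DERIV_add[OF d1 d2]])
qed
lemma pd_mult: "dif F \<Longrightarrow> dif G \<Longrightarrow> pd v (F * G) = pd v F * G + F * pd v G"
  unfolding pd_def dif_def plus_fun_def times_fun_def
proof (intro ext)
  fix p assume a: "\<forall>v p. (\<lambda>s. F (p(v := s))) differentiable at (p v)" "\<forall>v p. (\<lambda>s. G (p(v := s))) differentiable at (p v)"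
  have d1: "DERIV (\<lambda>s. F (p(v := s))) (p v) :> deriv (\<lambda>s. F (p(v := s))) (p v)"
    using a(1) DERIV_deriv_iff_real_differentiable by blast
  have d2: "DERIV (\<lambda>s. G (p(v := s))) (p v) :> deriv (\<lambda>s. G (p(v := s))) (p v)"
    using a(2) DERIV_deriv_iff_real_differentiable by blast
  have "DERIV (\<lambda>s. F (p(v := s)) * G (p(v := s))) (p v) :> deriv (\<lambda>s. F (p(v := s))) (p v) * G (p(v := p v)) + F (p(v := p v)) * deriv (\<lambda>s. G (p(v := s))) (p v)"
    using DERIV_mult'[OF d1 d2] by (simp add: algebra_simps)
  then show "deriv (\<lambda>s. F (p(v := s)) * G (p(v := s))) (p v) = deriv (\<lambda>s. F (p(v := s))) (p v) * G p + F p * deriv (\<lambda>s. G (p(v := s))) (p v)"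
    by (simp add: DERIV_imp_deriv)
qed
lemma pd_neg: "dif F \<Longrightarrow> pd v (- F) = - pd v F"
  unfolding pd_def dif_def fun_Compl_def
proof (intro ext)
  fix p assume a: "\<forall>v p. (\<lambda>s. F (p(v := s))) differentiable at (p v)"
  have d1: "DERIV (\<lambda>s. F (p(v := s))) (p v) :> deriv (\<lambda>s. F (p(v := s))) (p v)"
    using a(1) DERIV_deriv_iff_real_differentiable by blast
  show "deriv (\<lambda>s. - F (p(v := s))) (p v) = - deriv (\<lambda>s. F (p(v := s))) (p v)"
    by (rule DERIV_imp_deriv[OF DERIV_minus[OF d1]])
qed

inductive good :: "fn set \<Rightarrow> fn \<Rightarrow> bool" for B where
  gbase: "F \<in> B \<Longrightarrow> good B F"
| gcoord: "good B (coord w)"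
| gconst: "good B (\<lambda>_. c)"
| gadd0: "good B F \<Longrightarrow> good B G \<Longrightarrow> H = F + G \<Longrightarrow> good B H"
| gmult0: "good B F \<Longrightarrow> good B G \<Longrightarrow> H = F * G \<Longrightarrow> good B H"
| gneg0: "good B F \<Longrightarrow> H = - F \<Longrightarrow> good B H"

lemma gadd: "good B F \<Longrightarrow> good B G \<Longrightarrow> good B (F + G)" by (rule gadd0) auto
lemma gmult: "good B F \<Longrightarrow> good B G \<Longrightarrow> good B (F * G)" by (rule gmult0) auto
lemma gneg: "good B F \<Longrightarrow> good B (- F)" by (rule gneg0) auto

definition okB :: "fn set \<Rightarrow> bool" where
  "okB B \<longleftrightarrow> (\<forall>F\<in>B. dif F \<and> (\<forall>v. pd v F \<in> B) \<and> (\<forall>a b. pd a (pd b F) = pd b (pd a F)))"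

lemma good_zero: "good B 0" unfolding zero_fun_def by (rule gconst)
lemma good_one: "good B 1" unfolding one_fun_def by (rule gconst)
lemma good_diff: "good B F \<Longrightarrow> good B G \<Longrightarrow> good B (F - G)"
  using gadd[OF _ gneg] by (metis diff_conv_add_uminus)
lemma good_sum: "(\<And>x. x \<in> A \<Longrightarrow> good B (f x)) \<Longrightarrow> good B (\<Sum>x\<in>A. f x)"
proof (induction A rule: infinite_finite_induct)
  case (infinite A) have "(\<Sum>x\<in>A. f x) = 0" by (rule sum.infinite[OF infinite(1)])
  then show ?case by (simp only: good_zero)
next
  case empty then show ?case by (simp only: sum.empty good_zero)
next
  case (insert x F) 
  have "good B (f x)" "good B (\<Sum>x\<in>F. f x)" using insert by blast+
  then show ?case unfolding sum.insert[OF insert(1,2)] by (rule gadd)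
qed

lemma good_dif: assumes ok: "okB B" and g: "good B F" shows "dif F"
  using g
proof (induction rule: good.induct)
  case (gbase F) then show ?case using ok by (auto simp: okB_def)
next
  case (gcoord w) then show ?case by (rule dif_coord)
next
  case (gconst c) then show ?case by (rule dif_const)
next
  case (gadd0 F G H) then show ?case using dif_add by blast
next
  case (gmult0 F G H) then show ?case using dif_mult by blast
next
  case (gneg0 F H) then show ?case using dif_neg by blast
qed

lemma good_pd: assumes ok: "okB B" and g: "good B F" shows "good B (pd v F)"
  using g
proof (induction rule: good.induct)
  case (gbase F) then show ?case using ok by (auto simp: okB_def intro: good.gbase)
next
  case (gcoord w) then show ?case unfolding pd_coord by (rule gconst)
next
  case (gconst c) then show ?case unfolding pd_const by (rule gconst)
next
  case (gadd0 F G H)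
  have d: "dif F" "dif G" using gadd0 good_dif[OF ok] by blast+
  show ?case unfolding gadd0.hyps(3) pd_add[OF d] by (rule gadd[OF gadd0.IH])
next
  case (gmult0 F G H)
  have d: "dif F" "dif G" using gmult0 good_dif[OF ok] by blast+
  show ?case unfolding gmult0.hyps(3) pd_mult[OF d]
    by (rule gadd; rule gmult; (rule gmult0.IH | rule gmult0.hyps))
next
  case (gneg0 F H)
  have d: "dif F" using gneg0 good_dif[OF ok] by blast+
  show ?case unfolding gneg0.hyps(2) pd_neg[OF d] by (rule gneg[OF gneg0.IH])
qed

lemma good_comm: assumes ok: "okB B" and g: "good B F" shows "pd a (pd b F) = pd b (pd a F)"
  using g
proof (induction rule: good.induct)
  case (gbase F) then show ?case using ok by (auto simp: okB_def)
next
  case (gcoord w) then show ?case by (simp add: pd_coord)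
next
  case (gconst c) then show ?case by simp
next
  case (gadd0 F G H)
  have d: "dif F" "dif G" "dif (pd b F)" "dif (pd b G)" "dif (pd a F)" "dif (pd a G)"
    using gadd0 good_dif[OF ok] good_pd[OF ok] by blast+
  have e: "pd a (pd b F) = pd b (pd a F)" "pd a (pd b G) = pd b (pd a G)" using gadd0.IH by blast+
  show ?case unfolding gadd0.hyps(3) pd_add[OF d(1,2)] pd_add[OF d(3,4)] pd_add[OF d(5,6)] e ..
next
  case (gmult0 F G H)
  have d: "dif F" "dif G" "dif (pd a F)" "dif (pd b F)" "dif (pd a G)" "dif (pd b G)"
    using gmult0 good_dif[OF ok] good_pd[OF ok] by blast+
  have d2: "dif (pd b F * G)" "dif (F * pd b G)" "dif (pd a F * G)" "dif (F * pd a G)"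
    using d by (auto intro: dif_mult)
  have e: "pd a (pd b F) = pd b (pd a F)" "pd a (pd b G) = pd b (pd a G)" using gmult0.IH by blast+
  show ?case unfolding gmult0.hyps(3) pd_mult[OF d(1,2)] pd_add[OF d2(1,2)] pd_add[OF d2(3,4)]
      pd_mult[OF d(4,2)] pd_mult[OF d(1,6)] pd_mult[OF d(3,2)] pd_mult[OF d(1,5)] e
    by (simp only: algebra_simps)
next
  case (gneg0 F H)
  have d: "dif F" "dif (pd b F)" "dif (pd a F)"
    using gneg0 good_dif[OF ok] good_pd[OF ok] by blast+
  have e: "pd a (pd b F) = pd b (pd a F)" using gneg0.IH by blast+
  show ?case unfolding gneg0.hyps(2) pd_neg[OF d(1)] pd_neg[OF d(2)] pd_neg[OF d(3)] e ..
qed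

lemma dif_sum: "(\<And>x. x \<in> A \<Longrightarrow> dif (f x)) \<Longrightarrow> dif (\<Sum>x\<in>A. f x)"
proof (induction A rule: infinite_finite_induct)
  case (infinite A) show ?case unfolding sum.infinite[OF infinite(1)] zero_fun_def by (rule dif_const)
next
  case empty show ?case unfolding sum.empty zero_fun_def by (rule dif_const)
next
  case (insert x F)
  have "dif (f x)" "dif (\<Sum>x\<in>F. f x)" using insert by blast+
  then show ?case unfolding sum.insert[OF insert(1,2)] by (rule dif_add)
qed

lemma pd_sum: "(\<And>x. x \<in> A \<Longrightarrow> dif (f x)) \<Longrightarrow> pd v (\<Sum>x\<in>A. f x) = (\<Sum>x\<in>A. pd v (f x))"
proof (induction A rule: infinite_finite_induct)
  case (insert x F)
  have d: "dif (f x)" "dif (\<Sum>x\<in>F. f x)" using insert by (blast, intro dif_sum, blast)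
  have e: "pd v (\<Sum>x\<in>F. f x) = (\<Sum>x\<in>F. pd v (f x))" using insert by blast
  show ?case unfolding sum.insert[OF insert(1,2)] pd_add[OF d] e ..
qed auto




definition fD :: "var \<Rightarrow> fn fls \<Rightarrow> fn fls" where
  "fD v F = Abs_fls (\<lambda>i. pd v (F $$ i))"

lemma fD_nth: "fD v F $$ i = pd v (F $$ i)"
proof -
  obtain N where N: "\<forall>n<N. F $$ n = 0" by (rule fls_nth_vanishes_belowE)
  have "\<forall>n<N. pd v (F $$ n) = 0" using N by simp
  then show ?thesis unfolding fD_def by (rule nth_Abs_fls_lower_bound)
qed

definition gF :: "fn set \<Rightarrow> fn fls \<Rightarrow> bool" where
  "gF B F \<longleftrightarrow> (\<forall>i. good B (F $$ i))"

lemma gF_nth: "gF B F \<Longrightarrow> good B (F $$ i)" unfolding gF_def by blast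

lemma gF_zero: "gF B 0" unfolding gF_def fls_zero_nth by (blast intro: good_zero)
lemma gF_one: "gF B 1" unfolding gF_def fls_one_nth using good_zero good_one by presburger
lemma gF_add: "gF B F \<Longrightarrow> gF B G \<Longrightarrow> gF B (F + G)"
  unfolding gF_def fls_plus_nth by (blast intro: gadd)
lemma gF_neg: "gF B F \<Longrightarrow> gF B (- F)"
  unfolding gF_def fls_uminus_nth by (blast intro: gneg)
lemma gF_diff: "gF B F \<Longrightarrow> gF B G \<Longrightarrow> gF B (F - G)"
  unfolding gF_def fls_minus_nth by (blast intro: good_diff)
lemma gF_mult: "gF B F \<Longrightarrow> gF B G \<Longrightarrow> gF B (F * G)"
  unfolding gF_def fls_times_nth(2) by (blast intro: good_sum gmult)
lemma gF_shift: "gF B F \<Longrightarrow> gF B (fls_shift m F)"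
  unfolding gF_def fls_shift_nth by blast
lemma gF_sum: "(\<And>x. x \<in> A \<Longrightarrow> gF B (f x)) \<Longrightarrow> gF B (\<Sum>x\<in>A. f x)"
  unfolding gF_def fls_nth_sum by (blast intro: good_sum)
lemma gF_fD: "okB B \<Longrightarrow> gF B F \<Longrightarrow> gF B (fD v F)"
  unfolding gF_def fD_nth by (blast intro: good_pd)

lemma times_nth_lb:
  fixes F G :: "'a::comm_ring fls"
  assumes a: "\<forall>i<a. F $$ i = 0" and b: "\<forall>j<b. G $$ j = 0"
  shows "(F * G) $$ n = (\<Sum>i=a..n-b. F $$ i * G $$ (n - i))"
proof -
  define S where "S = {min a (fls_subdegree F) .. n - min b (fls_subdegree G)}"
  have z: "F $$ i * G $$ (n - i) = 0" if "i < a \<or> i < fls_subdegree F \<or> i > n - b \<or> i > n - fls_subdegree G" for i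
    using that a b by (auto simp: fls_eq0_below_subdegree)
  have "(F * G) $$ n = (\<Sum>i=fls_subdegree F..n - fls_subdegree G. F $$ i * G $$ (n - i))"
    by (rule fls_times_nth(2))
  also have "\<dots> = (\<Sum>i\<in>S. F $$ i * G $$ (n - i))"
    by (rule sum.mono_neutral_left) (auto simp: S_def intro!: z)
  also have "\<dots> = (\<Sum>i=a..n-b. F $$ i * G $$ (n - i))"
    by (rule sum.mono_neutral_right) (auto simp: S_def intro!: z)
  finally show ?thesis .
qed

lemma fD_add: assumes ok: "okB B" and gf: "gF B F" and gg: "gF B G" shows "fD v (F + G) = fD v F + fD v G"
proof (rule fls_eqI)
  fix i
  have d: "dif (F $$ i)" "dif (G $$ i)" using good_dif[OF ok gF_nth[OF gf]] good_dif[OF ok gF_nth[OF gg]] by blast+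
  show "fD v (F + G) $$ i = (fD v F + fD v G) $$ i" unfolding fD_nth fls_plus_nth pd_add[OF d] ..
qed

lemma fD_neg: assumes ok: "okB B" and gf: "gF B F" shows "fD v (- F) = - fD v F"
proof (rule fls_eqI)
  fix i
  have d: "dif (F $$ i)" using good_dif[OF ok gF_nth[OF gf]] by blast
  show "fD v (- F) $$ i = (- fD v F) $$ i" unfolding fD_nth fls_uminus_nth pd_neg[OF d] ..
qed

lemma fD_diff: assumes ok: "okB B" and gf: "gF B F" and gg: "gF B G" shows "fD v (F - G) = fD v F - fD v G"
proof -
  have "fD v (F + - G) = fD v F + - fD v G"
    unfolding fD_add[OF ok gf gF_neg[OF gg]] fD_neg[OF ok gg] ..
  then show ?thesis by (simp only: diff_conv_add_uminus)
qed

lemma fD_zero: "fD v 0 = 0"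
  by (rule fls_eqI) (simp only: fD_nth fls_zero_nth pd_zero)

lemma fD_constant: assumes c: "\<And>i. \<exists>c. F $$ i = (\<lambda>_. c)" shows "fD v F = 0"
proof (rule fls_eqI)
  fix i
  obtain c where e: "F $$ i = (\<lambda>_. c)" using c by blast
  show "fD v F $$ i = 0 $$ i" unfolding fD_nth e fls_zero_nth pd_const zero_fun_def ..
qed

lemma fD_one: "fD v 1 = 0"
proof (rule fD_constant)
  fix i :: int
  show "\<exists>c. (1::fn fls) $$ i = (\<lambda>_. c)"
  proof (cases "i = 0")
    case True then show ?thesis unfolding fls_one_nth one_fun_def by auto
  next
    case False then show ?thesis unfolding fls_one_nth zero_fun_def by auto
  qed
qed

lemma fD_sum: "okB B \<Longrightarrow> (\<And>x. x \<in> A \<Longrightarrow> gF B (f x)) \<Longrightarrow> fD v (\<Sum>x\<in>A. f x) = (\<Sum>x\<in>A. fD v (f x))"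
proof (induction A rule: infinite_finite_induct)
  case (infinite A) show ?case unfolding sum.infinite[OF infinite(1)] by (rule fD_zero)
next
  case empty show ?case unfolding sum.empty by (rule fD_zero)
next
  case (insert x F)
  have g: "gF B (f x)" "gF B (\<Sum>x\<in>F. f x)" using insert by (blast, intro gF_sum, blast)
  have e: "fD v (\<Sum>x\<in>F. f x) = (\<Sum>x\<in>F. fD v (f x))" using insert by blast
  show ?case unfolding sum.insert[OF insert(1,2)] fD_add[OF insert(4) g] e ..
qed

lemma fD_comm: assumes ok: "okB B" and gf: "gF B F" shows "fD a (fD b F) = fD b (fD a F)"
proof (rule fls_eqI)
  fix i
  show "fD a (fD b F) $$ i = fD b (fD a F) $$ i" unfolding fD_nth good_comm[OF ok gF_nth[OF gf]] ..
qed

lemma fD_mult: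
  assumes ok: "okB B" and gf: "gF B F" and gg: "gF B G"
  shows "fD v (F * G) = fD v F * G + F * fD v G"
proof (rule fls_eqI)
  fix n
  define a where "a = fls_subdegree F"
  define b where "b = fls_subdegree G"
  have za: "\<forall>i<a. F $$ i = 0" "\<forall>i<a. fD v F $$ i = 0" unfolding a_def fD_nth by simp_all
  have zb: "\<forall>i<b. G $$ i = 0" "\<forall>i<b. fD v G $$ i = 0" unfolding b_def fD_nth by simp_all
  have d: "dif (F $$ i)" "dif (G $$ i)" for i using good_dif[OF ok gF_nth[OF gf]] good_dif[OF ok gF_nth[OF gg]] by blast+
  have dm: "dif (F $$ i * G $$ (n - i))" for i by (rule dif_mult[OF d(1) d(2)])
  have "fD v (F * G) $$ n = pd v (\<Sum>i=a..n-b. F $$ i * G $$ (n - i))"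
    unfolding fD_nth times_nth_lb[OF za(1) zb(1)] ..
  also have "\<dots> = (\<Sum>i=a..n-b. pd v (F $$ i * G $$ (n - i)))"
    by (rule pd_sum) (rule dm)
  also have "\<dots> = (\<Sum>i=a..n-b. fD v F $$ i * G $$ (n - i) + F $$ i * fD v G $$ (n - i))"
    unfolding fD_nth pd_mult[OF d(1) d(2)] ..
  also have "\<dots> = (fD v F * G + F * fD v G) $$ n"
    unfolding fls_plus_nth times_nth_lb[OF za(2) zb(1)] times_nth_lb[OF za(1) zb(2)] sum.distrib ..
  finally show "fD v (F * G) $$ n = (fD v F * G + F * fD v G) $$ n" .
qed




definition bnd :: "ser \<Rightarrow> bool" where "bnd S \<longleftrightarrow> (\<exists>N. \<forall>i>N. S i = zero_fn)"
definition toF :: "ser \<Rightarrow> fn fls" where "toF S = Abs_fls (\<lambda>i. S (-i))"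
definition fromF :: "fn fls \<Rightarrow> ser" where "fromF F = (\<lambda>n. F $$ (-n))"

lemma zero_fn_eq: "zero_fn = 0" unfolding zero_fn_def zero_fun_def ..

lemma toF_nth: assumes "bnd S" shows "toF S $$ i = S (-i)"
proof -
  obtain N where N: "\<forall>i>N. S i = zero_fn" using assms unfolding bnd_def by blast
  have "\<forall>n< -N. S (-n) = 0" using N unfolding zero_fn_eq by simp
  then show ?thesis unfolding toF_def by (rule nth_Abs_fls_lower_bound)
qed

lemma fromF_toF: "bnd S \<Longrightarrow> fromF (toF S) = S"
  unfolding fromF_def by (rule ext) (simp only: toF_nth minus_minus)

lemma bnd_fromF: "bnd (fromF F)"
proof -
  obtain N where N: "\<forall>n<N. F $$ n = 0" by (rule fls_nth_vanishes_belowE)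
  have "\<forall>i> -N. fromF F i = zero_fn" unfolding fromF_def zero_fn_eq using N by simp
  then show ?thesis unfolding bnd_def by blast
qed

lemma toF_fromF: "toF (fromF F) = F"
  by (rule fls_eqI) (simp only: toF_nth[OF bnd_fromF], simp add: fromF_def)

lemma fromF_inj: "fromF F = fromF G \<Longrightarrow> F = G"
  by (metis toF_fromF)

lemma zero_ser_fromF: "zero_ser = fromF 0"
  unfolding zero_ser_def fromF_def zero_fn_eq fls_zero_nth ..

lemma one_ser_fromF: "one_ser = fromF 1"
  unfolding one_ser_def fromF_def zero_fn_eq fls_one_nth one_fun_def by (rule ext) simp

lemma sadd_fromF: "sadd (fromF F) (fromF G) = fromF (F + G)"
  unfolding sadd_def fromF_def fls_plus_nth plus_fun_def ..
lemma ssub_fromF: "ssub (fromF F) (fromF G) = fromF (F - G)"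
  unfolding ssub_def fromF_def fls_minus_nth by (simp only: fun_diff_def)
lemma sneg_fromF: "sneg (fromF F) = fromF (- F)"
  unfolding sneg_def fromF_def fls_uminus_nth by (simp only: fun_Compl_def)
lemma lampow_fromF: "lampow m (fromF F) = fromF (fls_shift (int m) F)"
  unfolding lampow_def fromF_def fls_shift_nth by (rule ext) simp
lemma spd_fromF: "spd v (fromF F) = fromF (fD v F)"
  unfolding spd_def fromF_def fD_nth ..

lemma pos_part_eq: "neg_part S = zero_ser \<Longrightarrow> pos_part S = S"
  unfolding neg_part_def pos_part_def zero_ser_def by (rule ext) (metis not_le)

lemma smult_fromF: "Defs.smult (fromF F) (fromF G) = fromF (F * G)"
proof (intro ext)
  fix n :: int and p
  define K where "K = {k. fromF F k \<noteq> zero_fn \<and> fromF G (n - k) \<noteq> zero_fn}"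
  define I where "I = {fls_subdegree F .. -n - fls_subdegree G}"
  define h where "h = (\<lambda>k. (F $$ (-k)) p * (G $$ (k - n)) p)"
  have KI: "K \<subseteq> uminus ` I"
  proof
    fix k assume "k \<in> K"
    then have a: "F $$ (-k) \<noteq> 0" "G $$ (k - n) \<noteq> 0" unfolding K_def fromF_def zero_fn_eq by auto
    have "fls_subdegree F \<le> -k" "fls_subdegree G \<le> k - n"
      using fls_subdegree_leI[OF a(1)] fls_subdegree_leI[OF a(2)] by auto
    then have "-k \<in> I" unfolding I_def by auto
    then show "k \<in> uminus ` I" by force
  qed
  have "Defs.smult (fromF F) (fromF G) n p = (\<Sum>k\<in>K. h k)"
    unfolding smult_def K_def h_def fromF_def by simp
  also have "\<dots> = (\<Sum>k\<in>uminus ` I. h k)"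
  proof (rule sum.mono_neutral_left)
    show "finite (uminus ` I)" unfolding I_def by simp
    show "K \<subseteq> uminus ` I" by (rule KI)
    show "\<forall>i\<in>uminus ` I - K. h i = 0"
      unfolding K_def h_def fromF_def zero_fn_eq by auto
  qed
  also have "\<dots> = (\<Sum>i\<in>I. h (-i))"
    by (subst sum.reindex) (auto simp: inj_on_def)
  also have "\<dots> = (\<Sum>i\<in>I. (F $$ i) p * (G $$ (-n - i)) p)"
  proof -
    have e: "\<And>i. - i - n = -n - (i::int)" by simp
    show ?thesis unfolding h_def minus_minus e ..
  qed
  also have "\<dots> = fromF (F * G) n p"
    unfolding fromF_def fls_times_nth(2)[of F G "-n"] I_def sum_fun_apply times_fun_apply ..
  finally show "Defs.smult (fromF F) (fromF G) n p = fromF (F * G) n p" .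
qed

lemma sum_fromF: "(\<lambda>n p. \<Sum>u\<in>U. fromF (Xs u) n p) = fromF (\<Sum>u\<in>U. Xs u)"
  unfolding fromF_def fls_nth_sum sum_fun_apply ..

lemma smult_zero_left: "Defs.smult zero_ser R = zero_ser"
  unfolding smult_def zero_ser_def zero_fn_def by auto

lemma vf_app_fromF:
  assumes fin: "finite U" and out: "\<And>u. u \<notin> U \<Longrightarrow> A u = 0"
    and Q: "\<And>u. u \<in> U \<Longrightarrow> spd u S = fromF (Q u)"
  shows "vf_app (\<lambda>u. fromF (A u)) S = fromF (\<Sum>u\<in>U. A u * Q u)"
proof (intro ext)
  fix n p
  have sub: "{u. fromF (A u) \<noteq> zero_ser} \<subseteq> U"
    using out unfolding zero_ser_fromF by auto
  have "vf_app (\<lambda>u. fromF (A u)) S n p = (\<Sum>u\<in>{u. fromF (A u) \<noteq> zero_ser}. Defs.smult (fromF (A u)) (spd u S) n p)"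
    unfolding vf_app_def ..
  also have "\<dots> = (\<Sum>u\<in>U. Defs.smult (fromF (A u)) (spd u S) n p)"
  proof (rule sum.mono_neutral_left[OF fin sub])
    show "\<forall>i\<in>U - {u. fromF (A u) \<noteq> zero_ser}. Defs.smult (fromF (A i)) (spd i S) n p = 0"
    proof
      fix i assume "i \<in> U - {u. fromF (A u) \<noteq> zero_ser}"
      then have e: "fromF (A i) = zero_ser" by blast
      show "Defs.smult (fromF (A i)) (spd i S) n p = 0"
        unfolding e smult_zero_left by (simp add: zero_ser_def zero_fn_def)
    qed
  qed
  also have "\<dots> = (\<Sum>u\<in>U. fromF (A u * Q u) n p)"
    by (rule sum.cong) (simp_all add: Q smult_fromF)
  also have "\<dots> = fromF (\<Sum>u\<in>U. A u * Q u) n p"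
    using sum_fromF[where U=U and Xs="\<lambda>u. A u * Q u"] by (auto simp: fun_eq_iff)
  finally show "vf_app (\<lambda>u. fromF (A u)) S n p = fromF (\<Sum>u\<in>U. A u * Q u) n p" .
qed




lemma fD_sum_mult:
  assumes ok: "okB BB" and fin: "finite U" and gB: "\<And>u. u \<in> U \<Longrightarrow> gF BB (Bf u)" and gP: "\<And>u. u \<in> U \<Longrightarrow> gF BB (P u)"
  shows "fD v (\<Sum>u\<in>U. Bf u * P u) = (\<Sum>u\<in>U. fD v (Bf u) * P u + Bf u * fD v (P u))"
proof -
  have "fD v (\<Sum>u\<in>U. Bf u * P u) = (\<Sum>u\<in>U. fD v (Bf u * P u))"
    by (rule fD_sum[OF ok]) (rule gF_mult[OF gB gP])
  also have "\<dots> = (\<Sum>u\<in>U. fD v (Bf u) * P u + Bf u * fD v (P u))"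
    by (rule sum.cong[OF refl]) (rule fD_mult[OF ok gB gP])
  finally show ?thesis .
qed

lemma bracket_fls:
  assumes ok: "okB BB" and fin: "finite U"
    and gA: "\<And>u. u \<in> U \<Longrightarrow> gF BB (Af u)" and gB: "\<And>u. u \<in> U \<Longrightarrow> gF BB (Bf u)"
    and gP: "\<And>u. u \<in> U \<Longrightarrow> gF BB (P u)"
    and sym: "\<And>u v. u \<in> U \<Longrightarrow> v \<in> U \<Longrightarrow> fD v (P u) = fD u (P v)"
    and hA: "(\<Sum>u\<in>U. Af u * P u) = 0" and hB: "(\<Sum>u\<in>U. Bf u * P u) = 0"
  shows "(\<Sum>u\<in>U. ((\<Sum>v\<in>U. Af v * fD v (Bf u)) - (\<Sum>v\<in>U. Bf v * fD v (Af u))) * P u) = 0"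
proof -
  define T1 where "T1 = (\<Sum>v\<in>U. \<Sum>u\<in>U. Af v * fD v (Bf u) * P u)"
  define T2 where "T2 = (\<Sum>v\<in>U. \<Sum>u\<in>U. Af v * Bf u * fD v (P u))"
  define T3 where "T3 = (\<Sum>v\<in>U. \<Sum>u\<in>U. Bf v * fD v (Af u) * P u)"
  define T4 where "T4 = (\<Sum>v\<in>U. \<Sum>u\<in>U. Bf v * Af u * fD v (P u))"
  have "0 = (\<Sum>v\<in>U. Af v * fD v (\<Sum>u\<in>U. Bf u * P u)) - (\<Sum>v\<in>U. Bf v * fD v (\<Sum>u\<in>U. Af u * P u))"
    unfolding hA hB fD_zero by simp
  also have "\<dots> = (\<Sum>v\<in>U. Af v * (\<Sum>u\<in>U. fD v (Bf u) * P u + Bf u * fD v (P u)))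
                 - (\<Sum>v\<in>U. Bf v * (\<Sum>u\<in>U. fD v (Af u) * P u + Af u * fD v (P u)))"
    by (simp only: fD_sum_mult[OF ok fin gB gP] fD_sum_mult[OF ok fin gA gP])
  also have "\<dots> = (T1 + T2) - (T3 + T4)"
    unfolding T1_def T2_def T3_def T4_def
    by (simp add: sum_distrib_left sum.distrib algebra_simps)
  finally have E: "(T1 + T2) - (T3 + T4) = 0" by simp
  have "T4 = (\<Sum>u\<in>U. \<Sum>v\<in>U. Bf v * Af u * fD v (P u))"
    unfolding T4_def by (rule sum.swap)
  also have "\<dots> = (\<Sum>u\<in>U. \<Sum>v\<in>U. Af u * Bf v * fD u (P v))"
    by (intro sum.cong refl) (simp add: sym algebra_simps)
  also have "\<dots> = T2" unfolding T2_def ..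
  finally have T42: "T4 = T2" .
  have "(\<Sum>u\<in>U. ((\<Sum>v\<in>U. Af v * fD v (Bf u)) - (\<Sum>v\<in>U. Bf v * fD v (Af u))) * P u)
      = (\<Sum>u\<in>U. \<Sum>v\<in>U. Af v * fD v (Bf u) * P u) - (\<Sum>u\<in>U. \<Sum>v\<in>U. Bf v * fD v (Af u) * P u)"
    unfolding left_diff_distrib sum_subtractf sum_distrib_right ..
  also have "\<dots> = T1 - T3"
  proof -
    have s1: "(\<Sum>u\<in>U. \<Sum>v\<in>U. Af v * fD v (Bf u) * P u) = T1" unfolding T1_def by (rule sum.swap)
    have s3: "(\<Sum>u\<in>U. \<Sum>v\<in>U. Bf v * fD v (Af u) * P u) = T3" unfolding T3_def by (rule sum.swap)
    show ?thesis unfolding s1 s3 ..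
  qed
  also have "\<dots> = 0" using E T42 by (simp add: algebra_simps)
  finally show ?thesis .
qed




lemma fD_shift: "fD v (fls_shift m F) = fls_shift m (fD v F)"
  by (rule fls_eqI) (simp only: fD_nth fls_shift_nth)

definition LL :: "fn fls" where "LL = fls_shift 1 1"
lemma fD_LL: "fD v LL = 0" unfolding LL_def fD_shift fD_one by simp
lemma gF_LL: "gF BB LL" unfolding LL_def by (rule gF_shift[OF gF_one])
lemma shift1_LL: "fls_shift 1 F = LL * F"
  unfolding LL_def fls_shifted_times_simps(2) by simp

lemma pd_negY: "pd v (\<lambda>p. - p Y) = (\<lambda>_. if v = Y then -1 else 0)"
proof -
  have e: "(\<lambda>p. - p Y) = - coord Y" unfolding coord_def fun_Compl_def ..
  show ?thesis unfolding e pd_neg[OF dif_coord] pd_coord by (auto simp: fun_Compl_def fun_eq_iff)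
qed

locale DF =
  fixes g f :: "nat \<Rightarrow> fn"
  assumes sg: "\<And>k. k \<ge> 1 \<Longrightarrow> smooth (g k)"
    and sf: "\<And>m. m \<ge> 1 \<Longrightarrow> smooth (f m)"
    and hier: "DF_hierarchy g f"
begin

definition BB :: "fn set" where
  "BB = {pds vs (g k) | vs k. k \<ge> 1} \<union> {pds vs (f m) | vs m. m \<ge> 1}"

lemma okBB: "okB BB"
  unfolding okB_def
proof
  fix F assume "F \<in> BB"
  then obtain vs h where F: "F = pds vs h" and sh: "smooth h" and hB: "\<And>ws. pds ws h \<in> BB"
    unfolding BB_def using sg sf by blast
  show "dif F \<and> (\<forall>v. pd v F \<in> BB) \<and> (\<forall>a b. pd a (pd b F) = pd b (pd a F))"
  proof (intro conjI allI)
    show "dif F" using sh unfolding F smooth_def dif_def by blast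
    fix v show "pd v F \<in> BB" using hB[of "v # vs"] unfolding F by simp
  next
    fix a b show "pd a (pd b F) = pd b (pd a F)" using sh unfolding F smooth_def by blast
  qed
qed

lemma inBB_g: "k \<ge> 1 \<Longrightarrow> g k \<in> BB" unfolding BB_def
  by (rule UnI1, rule CollectI, rule exI[of _ "[]"], rule exI[of _ k]) simp
lemma inBB_f: "k \<ge> 1 \<Longrightarrow> f k \<in> BB" unfolding BB_def
  by (rule UnI2, rule CollectI, rule exI[of _ "[]"], rule exI[of _ k]) simp

lemma good_phi1: "good BB (phi1 g i)"
proof -
  have e: "(\<lambda>p. - p Y) = - coord Y" unfolding coord_def fun_Compl_def ..
  have "good BB (\<lambda>p. - p Y)" unfolding e by (rule gneg[OF gcoord])
  moreover have "i < 0 \<Longrightarrow> good BB (g (nat (- i)))" by (rule gbase, rule inBB_g) simp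
  ultimately show ?thesis unfolding phi1_def by (auto intro: gcoord)
qed

lemma good_phi2: "good BB (phi2 f i)"
  unfolding phi2_def by (auto intro!: gcoord gbase inBB_f)

lemma bnd_spd1: "bnd (spd u (phi1 g))"
  unfolding bnd_def
proof (intro exI allI impI)
  fix i :: int assume i: "(case u of Z j \<Rightarrow> int j | _ \<Rightarrow> 0) < i"
  then have "i > 0" by (cases u) auto
  moreover have "u \<noteq> Z (nat i + 1)" using i by (auto split: if_splits)
  ultimately show "spd u (phi1 g) i = zero_fn"
    by (simp add: spd_def phi1_def pd_coord zero_fn_def)
qed

lemma bnd_spd2: "bnd (spd u (phi2 f))"
  unfolding bnd_def
proof (intro exI allI impI)
  fix i :: int assume i: "(case u of T j \<Rightarrow> int j | _ \<Rightarrow> 0) < i"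
  then have "i > 0" by (cases u) auto
  moreover have "u \<noteq> T (nat i)" using i by (auto split: if_splits)
  ultimately show "spd u (phi2 f) i = zero_fn"
    by (simp add: spd_def phi2_def pd_coord zero_fn_def)
qed

definition P1 where "P1 u = toF (spd u (phi1 g))"
definition P2 where "P2 u = toF (spd u (phi2 f))"

lemma spd1: "spd u (phi1 g) = fromF (P1 u)" unfolding P1_def fromF_toF[OF bnd_spd1] ..
lemma spd2: "spd u (phi2 f) = fromF (P2 u)" unfolding P2_def fromF_toF[OF bnd_spd2] ..

lemma P1_nth: "P1 u $$ i = pd u (phi1 g (-i))"
  unfolding P1_def by (subst toF_nth[OF bnd_spd1]) (simp add: spd_def)
lemma P2_nth: "P2 u $$ i = pd u (phi2 f (-i))"
  unfolding P2_def by (subst toF_nth[OF bnd_spd2]) (simp add: spd_def)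

lemma gF_P1: "gF BB (P1 u)" unfolding gF_def P1_nth by (blast intro: good_pd[OF okBB good_phi1])
lemma gF_P2: "gF BB (P2 u)" unfolding gF_def P2_nth by (blast intro: good_pd[OF okBB good_phi2])

lemma sym1: "fD v (P1 u) = fD u (P1 v)"
  by (rule fls_eqI) (simp only: fD_nth P1_nth good_comm[OF okBB good_phi1])
lemma sym2: "fD v (P2 u) = fD u (P2 v)"
  by (rule fls_eqI) (simp only: fD_nth P2_nth good_comm[OF okBB good_phi2])

lemma wedge_eq1: "wedge_coeff (phi1 g) (phi2 f) a b =
   fromF (fls_shift (int ((if is_z a then 1 else 0) + (if is_z b then 1 else 0))) (P1 a * P2 b - P1 b * P2 a))"
  unfolding wedge_coeff_def spd1 spd2 smult_fromF ssub_fromF lampow_fromF ..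

lemma hierF: "valid_var a \<Longrightarrow> valid_var b \<Longrightarrow> n > 0 \<Longrightarrow>
   fls_shift (int ((if is_z a then 1 else 0) + (if is_z b then 1 else 0))) (P1 a * P2 b - P1 b * P2 a) $$ n = 0"
  using hier unfolding DF_hierarchy_def wedge_eq1 neg_part_def zero_ser_def fromF_def zero_fn_eq
  by (metis (no_types, lifting) minus_minus neg_less_0_iff_less)

lemma P1X_low: "i < 1 \<Longrightarrow> P1 X $$ i = 0"
  unfolding P1_nth by (auto simp: phi1_def pd_negY pd_coord zero_fun_def)
lemma P2Y_low: "i < 1 \<Longrightarrow> P2 Y $$ i = 0"
  unfolding P2_nth by (auto simp: phi2_def pd_coord zero_fun_def)
lemma P1Y_low: "i < 0 \<Longrightarrow> P1 Y $$ i = 0"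
  unfolding P1_nth by (auto simp: phi1_def pd_coord zero_fun_def)
lemma P2X_low: "i < 0 \<Longrightarrow> P2 X $$ i = 0"
  unfolding P2_nth by (auto simp: phi2_def pd_coord zero_fun_def)
lemma P1Y_0: "P1 Y $$ 0 = (\<lambda>_. -1)"
  unfolding P1_nth by (auto simp: phi1_def pd_negY)
lemma P2X_0: "P2 X $$ 0 = (\<lambda>_. 1)"
  unfolding P2_nth by (auto simp: phi2_def pd_coord)

lemma det1: "P1 X * P2 Y - P1 Y * P2 X = 1"
proof (rule fls_eqI)
  fix n :: int
  show "(P1 X * P2 Y - P1 Y * P2 X) $$ n = 1 $$ n"
  proof (cases "n > 0")
    case True
    have "valid_var X" "valid_var Y" "\<not> is_z X" "\<not> is_z Y" by (simp_all add: valid_var_def is_z_def)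
    then show ?thesis using hierF[of X Y n] True by simp
  next
    case False
    have a0: "(P1 X * P2 Y) $$ n = (\<Sum>i=1..n-1. P1 X $$ i * P2 Y $$ (n - i))"
      by (rule times_nth_lb) (auto intro: P1X_low P2Y_low)
    have a: "(P1 X * P2 Y) $$ n = 0" unfolding a0 using False by simp
    have b: "(P1 Y * P2 X) $$ n = (\<Sum>i=0..n-0. P1 Y $$ i * P2 X $$ (n - i))"
      by (rule times_nth_lb) (auto intro: P1Y_low P2X_low)
    show ?thesis
    proof (cases "n = 0")
      case True
      then show ?thesis using a b by (simp add: P1Y_0 P2X_0 fun_eq_iff)
    next
      case False2: False
      then have "n < 0" using False by simp
      then show ?thesis using a b by simp
    qed
  qed
qed

lemma hier_c: assumes "valid_var a" "valid_var b" "\<not> (is_z a \<and> is_z b)" "n > 0"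
  shows "((if is_z a \<or> is_z b then LL else 1) * (P1 a * P2 b - P1 b * P2 a)) $$ n = 0"
proof (cases "is_z a \<or> is_z b")
  case True
  then have e: "int ((if is_z a then 1 else 0) + (if is_z b then 1 else 0)) = 1" using assms(3) by auto
  have "fls_shift 1 (P1 a * P2 b - P1 b * P2 a) $$ n = 0" using hierF[OF assms(1,2,4)] unfolding e .
  then show ?thesis using True unfolding shift1_LL by simp
next
  case False
  then show ?thesis using hierF[OF assms(1,2,4)] by simp
qed

lemma pos_fromF: "(\<And>n. n > 0 \<Longrightarrow> D $$ n = 0) \<Longrightarrow> pos_part (fromF D) = fromF D"
  unfolding pos_part_def fromF_def zero_fn_eq by (rule ext) auto

definition Avf :: "fn fls \<Rightarrow> var \<Rightarrow> var \<Rightarrow> fn fls" where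
  "Avf c w = (\<lambda>u. if u = w then c
      else if u = X then - (c * (P1 w * P2 Y - P1 Y * P2 w))
      else if u = Y then - (c * (P1 X * P2 w - P1 w * P2 X)) else 0)"

lemma Tvf_eq: assumes n: "n \<ge> 1" shows "Tvf g f n = (\<lambda>u. fromF (Avf 1 (T n) u))"
proof (rule ext)
  fix u
  define w where "w = T n"
  have v: "valid_var w" "\<not> is_z w" "valid_var X" "\<not> is_z X" "valid_var Y" "\<not> is_z Y" "w \<noteq> X" "w \<noteq> Y"
    using n by (simp_all add: valid_var_def is_z_def w_def)
  have pX: "pos_part (fromF (P1 w * P2 Y - P1 Y * P2 w)) = fromF (P1 w * P2 Y - P1 Y * P2 w)"
    by (rule pos_fromF) (use hier_c[of w Y] v in simp)
  have pY: "pos_part (fromF (P1 X * P2 w - P1 w * P2 X)) = fromF (P1 X * P2 w - P1 w * P2 X)"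
    by (rule pos_fromF) (use hier_c[of X w] v in simp)
  have sX: "sdet (spd w (phi1 g)) (spd w (phi2 f)) (spd Y (phi1 g)) (spd Y (phi2 f)) = fromF (P1 w * P2 Y - P1 Y * P2 w)"
    unfolding sdet_def spd1 spd2 smult_fromF ssub_fromF mult.commute[of "P2 w" "P1 Y"] ..
  have sY: "sdet (spd w (phi2 f)) (spd w (phi1 g)) (spd X (phi2 f)) (spd X (phi1 g)) = fromF (P1 X * P2 w - P1 w * P2 X)"
    unfolding sdet_def spd1 spd2 smult_fromF ssub_fromF mult.commute[of "P2 w" "P1 X"] mult.commute[of "P1 w" "P2 X"] ..
  show "Tvf g f n u = fromF (Avf 1 (T n) u)"
    unfolding Tvf_def Let_def w_def[symmetric] Avf_def
    using v by (simp add: sX sY pX pY sneg_fromF one_ser_fromF zero_ser_fromF)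
qed

lemma Zvf_eq: assumes j: "j \<ge> 1" shows "Zvf g f j = (\<lambda>u. fromF (Avf LL (Z j) u))"
proof (rule ext)
  fix u
  define w where "w = Z j"
  have v: "valid_var w" "is_z w" "valid_var X" "\<not> is_z X" "valid_var Y" "\<not> is_z Y" "w \<noteq> X" "w \<noteq> Y"
    using j by (simp_all add: valid_var_def is_z_def w_def)
  have pX: "pos_part (fromF (LL * (P1 w * P2 Y - P1 Y * P2 w))) = fromF (LL * (P1 w * P2 Y - P1 Y * P2 w))"
    by (rule pos_fromF) (use hier_c[of w Y] v in simp)
  have pY: "pos_part (fromF (LL * (P1 X * P2 w - P1 w * P2 X))) = fromF (LL * (P1 X * P2 w - P1 w * P2 X))"
    by (rule pos_fromF) (use hier_c[of X w] v in simp)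
  have sX: "sdet (lampow 1 (spd w (phi1 g))) (lampow 1 (spd w (phi2 f))) (spd Y (phi1 g)) (spd Y (phi2 f)) = fromF (LL * (P1 w * P2 Y - P1 Y * P2 w))"
    unfolding sdet_def spd1 spd2 lampow_fromF smult_fromF ssub_fromF of_nat_1 shift1_LL
    by (simp add: algebra_simps)
  have sY: "sdet (lampow 1 (spd w (phi2 f))) (lampow 1 (spd w (phi1 g))) (spd X (phi2 f)) (spd X (phi1 g)) = fromF (LL * (P1 X * P2 w - P1 w * P2 X))"
    unfolding sdet_def spd1 spd2 lampow_fromF smult_fromF ssub_fromF of_nat_1 shift1_LL
    by (simp add: algebra_simps)
  have L1: "lampow 1 one_ser = fromF LL"
    unfolding one_ser_fromF lampow_fromF of_nat_1 LL_def ..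
  show "Zvf g f j u = fromF (Avf LL (Z j) u)"
    unfolding Zvf_def Let_def w_def[symmetric] Avf_def sX sY pX pY L1
    using v by (simp add: sneg_fromF zero_ser_fromF)
qed

lemma Avf_out: "u \<noteq> w \<Longrightarrow> u \<noteq> X \<Longrightarrow> u \<noteq> Y \<Longrightarrow> Avf c w u = 0"
  unfolding Avf_def by simp

lemma Avf_sum:
  assumes wX: "w \<noteq> X" and wY: "w \<noteq> Y" and fin: "finite U" and sub: "{w, X, Y} \<subseteq> U"
  shows "(\<Sum>u\<in>U. Avf c w u * Q u) = c * Q w - c * (P1 w * P2 Y - P1 Y * P2 w) * Q X - c * (P1 X * P2 w - P1 w * P2 X) * Q Y"
proof -
  have "(\<Sum>u\<in>U. Avf c w u * Q u) = (\<Sum>u\<in>{w, X, Y}. Avf c w u * Q u)"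
    by (rule sum.mono_neutral_right[OF fin sub]) (auto simp: Avf_out)
  also have "\<dots> = c * Q w - c * (P1 w * P2 Y - P1 Y * P2 w) * Q X - c * (P1 X * P2 w - P1 w * P2 X) * Q Y"
    using wX wY by (simp add: Avf_def algebra_simps)
  finally show ?thesis .
qed

lemma key1:
  assumes wX: "w \<noteq> X" and wY: "w \<noteq> Y" and fin: "finite U" and sub: "{w, X, Y} \<subseteq> U"
  shows "(\<Sum>u\<in>U. Avf c w u * P1 u) = 0" "(\<Sum>u\<in>U. Avf c w u * P2 u) = 0"
proof -
  have "(\<Sum>u\<in>U. Avf c w u * P1 u) = c * P1 w * (1 - (P1 X * P2 Y - P1 Y * P2 X))"
    unfolding Avf_sum[OF assms] by (simp add: algebra_simps)
  then show "(\<Sum>u\<in>U. Avf c w u * P1 u) = 0" unfolding det1 by simp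
  have "(\<Sum>u\<in>U. Avf c w u * P2 u) = c * P2 w * (1 - (P1 X * P2 Y - P1 Y * P2 X))"
    unfolding Avf_sum[OF assms] by (simp add: algebra_simps)
  then show "(\<Sum>u\<in>U. Avf c w u * P2 u) = 0" unfolding det1 by simp
qed

lemma vf_zero:
  assumes wX: "w \<noteq> X" and wY: "w \<noteq> Y"
  shows "vf_app (\<lambda>u. fromF (Avf c w u)) (phi1 g) = zero_ser"
    "vf_app (\<lambda>u. fromF (Avf c w u)) (phi2 f) = zero_ser"
proof -
  have fin: "finite {w, X, Y}" by simp
  have out: "\<And>u. u \<notin> {w, X, Y} \<Longrightarrow> Avf c w u = 0" by (simp add: Avf_out)
  have "vf_app (\<lambda>u. fromF (Avf c w u)) (phi1 g) = fromF (\<Sum>u\<in>{w, X, Y}. Avf c w u * P1 u)"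
    by (rule vf_app_fromF[where A="Avf c w" and Q=P1]) (simp_all add: out spd1)
  then show "vf_app (\<lambda>u. fromF (Avf c w u)) (phi1 g) = zero_ser"
    unfolding key1(1)[OF wX wY fin order_refl] zero_ser_fromF .
  have "vf_app (\<lambda>u. fromF (Avf c w u)) (phi2 f) = fromF (\<Sum>u\<in>{w, X, Y}. Avf c w u * P2 u)"
    by (rule vf_app_fromF[where A="Avf c w" and Q=P2]) (simp_all add: out spd2)
  then show "vf_app (\<lambda>u. fromF (Avf c w u)) (phi2 f) = zero_ser"
    unfolding key1(2)[OF wX wY fin order_refl] zero_ser_fromF .
qed

lemma gF_Avf: "gF BB c \<Longrightarrow> gF BB (Avf c w u)"
  unfolding Avf_def by (auto intro!: gF_neg gF_mult gF_diff gF_P1 gF_P2 gF_zero)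

lemma fD_Avf: "u \<noteq> X \<Longrightarrow> u \<noteq> Y \<Longrightarrow> fD v c = 0 \<Longrightarrow> fD v (Avf c w u) = 0"
  unfolding Avf_def by (simp add: fD_zero)

lemma bracket_zero:
  assumes w1X: "w1 \<noteq> X" and w1Y: "w1 \<noteq> Y" and w2X: "w2 \<noteq> X" and w2Y: "w2 \<noteq> Y"
    and g1: "gF BB c1" and g2: "gF BB c2" and d1: "\<And>v. fD v c1 = 0" and d2: "\<And>v. fD v c2 = 0"
  shows "vf_bracket (\<lambda>u. fromF (Avf c1 w1 u)) (\<lambda>u. fromF (Avf c2 w2 u)) = zero_vf"
proof -
  define U where "U = {X, Y, w1, w2}"
  define A where "A = Avf c1 w1"
  define Bv where "Bv = Avf c2 w2"
  define C where "C u = (\<Sum>v\<in>U. A v * fD v (Bv u)) - (\<Sum>v\<in>U. Bv v * fD v (A u))" for u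
  have fin: "finite U" unfolding U_def by simp
  have outA: "\<And>u. u \<notin> U \<Longrightarrow> A u = 0" unfolding U_def A_def by (simp add: Avf_out)
  have outB: "\<And>u. u \<notin> U \<Longrightarrow> Bv u = 0" unfolding U_def Bv_def by (simp add: Avf_out)
  have br: "vf_bracket (\<lambda>u. fromF (A u)) (\<lambda>u. fromF (Bv u)) = (\<lambda>u. fromF (C u))"
  proof (rule ext)
    fix u
    have a: "vf_app (\<lambda>u. fromF (A u)) (fromF (Bv u)) = fromF (\<Sum>v\<in>U. A v * fD v (Bv u))"
      by (rule vf_app_fromF[where A=A and Q="\<lambda>v. fD v (Bv u)"]) (simp_all add: fin outA spd_fromF)
    have b: "vf_app (\<lambda>u. fromF (Bv u)) (fromF (A u)) = fromF (\<Sum>v\<in>U. Bv v * fD v (A u))"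
      by (rule vf_app_fromF[where A=Bv and Q="\<lambda>v. fD v (A u)"]) (simp_all add: fin outB spd_fromF)
    show "vf_bracket (\<lambda>u. fromF (A u)) (\<lambda>u. fromF (Bv u)) u = fromF (C u)"
      unfolding vf_bracket_def C_def a b ssub_fromF ..
  qed
  have Cc: "C u = 0" if "u \<noteq> X" "u \<noteq> Y" for u
  proof -
    have "fD v (A u) = 0" "fD v (Bv u) = 0" for v
      unfolding A_def Bv_def using that d1 d2 by (simp_all add: fD_Avf)
    then show ?thesis unfolding C_def by simp
  qed
  have gA: "\<And>u. u \<in> U \<Longrightarrow> gF BB (A u)" unfolding A_def by (rule gF_Avf[OF g1])
  have gB: "\<And>u. u \<in> U \<Longrightarrow> gF BB (Bv u)" unfolding Bv_def by (rule gF_Avf[OF g2])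
  have subA: "{w1, X, Y} \<subseteq> U" and subB: "{w2, X, Y} \<subseteq> U" unfolding U_def by auto
  have split: "(\<Sum>u\<in>U. C u * Q u) = C X * Q X + C Y * Q Y" for Q
  proof -
    have "(\<Sum>u\<in>U. C u * Q u) = (\<Sum>u\<in>{X, Y}. C u * Q u)"
      by (rule sum.mono_neutral_right[OF fin]) (auto simp: U_def Cc)
    then show ?thesis by simp
  qed
  have hA1: "(\<Sum>u\<in>U. A u * P1 u) = 0" unfolding A_def by (rule key1(1)[OF w1X w1Y fin subA])
  have hB1: "(\<Sum>u\<in>U. Bv u * P1 u) = 0" unfolding Bv_def by (rule key1(1)[OF w2X w2Y fin subB])
  have hA2: "(\<Sum>u\<in>U. A u * P2 u) = 0" unfolding A_def by (rule key1(2)[OF w1X w1Y fin subA])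
  have hB2: "(\<Sum>u\<in>U. Bv u * P2 u) = 0" unfolding Bv_def by (rule key1(2)[OF w2X w2Y fin subB])
  have "(\<Sum>u\<in>U. C u * P1 u) = 0" unfolding C_def
    by (rule bracket_fls[OF okBB fin gA gB gF_P1 sym1 hA1 hB1])
  then have e1: "C X * P1 X + C Y * P1 Y = 0" unfolding split .
  have "(\<Sum>u\<in>U. C u * P2 u) = 0" unfolding C_def
    by (rule bracket_fls[OF okBB fin gA gB gF_P2 sym2 hA2 hB2])
  then have e2: "C X * P2 X + C Y * P2 Y = 0" unfolding split .
  have CX: "C X = 0"
  proof -
    have "C X = C X * (P1 X * P2 Y - P1 Y * P2 X)" unfolding det1 by simp
    also have "\<dots> = (C X * P1 X + C Y * P1 Y) * P2 Y - (C X * P2 X + C Y * P2 Y) * P1 Y"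
      by (simp add: algebra_simps)
    also have "\<dots> = 0" unfolding e1 e2 by simp
    finally show ?thesis .
  qed
  have CY: "C Y = 0"
  proof -
    have "C Y = C Y * (P1 X * P2 Y - P1 Y * P2 X)" unfolding det1 by simp
    also have "\<dots> = (C X * P2 X + C Y * P2 Y) * P1 X - (C X * P1 X + C Y * P1 Y) * P2 X"
      by (simp add: algebra_simps)
    also have "\<dots> = 0" unfolding e1 e2 by simp
    finally show ?thesis .
  qed
  have "\<And>u. C u = 0" using CX CY Cc by metis
  then show ?thesis unfolding A_def[symmetric] Bv_def[symmetric] br zero_vf_def zero_ser_fromF by simp
qed

end

theorem mainTheorem2:
  fixes g f :: "nat \<Rightarrow> fn"
  assumes smooth_g: "\<And>k. k \<ge> 1 \<Longrightarrow> smooth (g k)"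
    and smooth_f: "\<And>m. m \<ge> 1 \<Longrightarrow> smooth (f m)"
    and hier: "DF_hierarchy g f"
  shows "(\<forall>n \<ge> 1. vf_app (Tvf g f n) (phi1 g) = zero_ser \<and> vf_app (Tvf g f n) (phi2 f) = zero_ser)
       \<and> (\<forall>j \<ge> 1. vf_app (Zvf g f j) (phi1 g) = zero_ser \<and> vf_app (Zvf g f j) (phi2 f) = zero_ser)
       \<and> (\<forall>n \<ge> 1. \<forall>s \<ge> 1. vf_bracket (Tvf g f n) (Tvf g f s) = zero_vf)
       \<and> (\<forall>n \<ge> 1. \<forall>j \<ge> 1. vf_bracket (Tvf g f n) (Zvf g f j) = zero_vf)
       \<and> (\<forall>i \<ge> 1. \<forall>j \<ge> 1. vf_bracket (Zvf g f i) (Zvf g f j) = zero_vf)"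
proof -
  interpret DF g f by (unfold_locales) (fact smooth_g, fact smooth_f, fact hier)
  have tx: "T n \<noteq> X" "T n \<noteq> Y" "Z n \<noteq> X" "Z n \<noteq> Y" for n by simp_all
  show ?thesis
  proof (intro conjI allI impI)
    fix n :: nat assume "n \<ge> 1"
    then show "vf_app (Tvf g f n) (phi1 g) = zero_ser" "vf_app (Tvf g f n) (phi2 f) = zero_ser"
      unfolding Tvf_eq[OF \<open>n \<ge> 1\<close>] using vf_zero[OF tx(1,2)] by blast+
  next
    fix j :: nat assume "j \<ge> 1"
    then show "vf_app (Zvf g f j) (phi1 g) = zero_ser" "vf_app (Zvf g f j) (phi2 f) = zero_ser"
      unfolding Zvf_eq[OF \<open>j \<ge> 1\<close>] using vf_zero[OF tx(3,4)] by blast+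
  next
    fix n s :: nat assume a: "n \<ge> 1" "s \<ge> 1"
    show "vf_bracket (Tvf g f n) (Tvf g f s) = zero_vf"
      unfolding Tvf_eq[OF a(1)] Tvf_eq[OF a(2)]
      by (rule bracket_zero[OF tx(1,2) tx(1,2) gF_one gF_one fD_one fD_one])
  next
    fix n j :: nat assume a: "n \<ge> 1" "j \<ge> 1"
    show "vf_bracket (Tvf g f n) (Zvf g f j) = zero_vf"
      unfolding Tvf_eq[OF a(1)] Zvf_eq[OF a(2)]
      by (rule bracket_zero[OF tx(1,2) tx(3,4) gF_one gF_LL fD_one fD_LL])
  next
    fix i j :: nat assume a: "i \<ge> 1" "j \<ge> 1"
    show "vf_bracket (Zvf g f i) (Zvf g f j) = zero_vf"
      unfolding Zvf_eq[OF a(1)] Zvf_eq[OF a(2)]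
      by (rule bracket_zero[OF tx(3,4) tx(3,4) gF_LL gF_LL fD_LL fD_LL])
  qed
qed


end
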